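(* Let $1\le r\le n$, let $(z^1,\dots,z^n)$ be any random vector in $[r]^n$, and let $p,q\in[0,1]$. Let $\mathcal G$ be the random graph on $[n]$ in which, conditionally on $(z^1,\dots,z^n)$, each edge $\{i,j\}$ ($i\ne j$) is present independently with probability $p\,\mathbb 1\{z^i=z^j\}+q\,\mathbb 1\{z^i\ne z^j\}$. Then $\mathcal B(\mathcal G)\le n\log r$.
   Context: A random graph $\mathcal G$ on $[n]$ is identified with the random vector of edge indicators $(e^{ij})_{1\le i<j\le n}\in\{0,1\}^{\binom n2}$. For a random vector $x=(x^1,\dots,x^m)$ on a finite product set, the dual total correlation is $\mathcal B(x)=\mathcal H(x)-\sum_{i=1}^m\mathcal H(x^i\mid x^{-i})$, with $\mathcal H$ Shannon entropy and $x^{-i}$ the vector with coordinate $i$ removed. *)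

theory Defs
  imports "HOL-Probability.Probability"
begin

definition shannon_entropy :: "'a pmf \<Rightarrow> real" where
  "shannon_entropy P = (\<Sum>x\<in>set_pmf P. - pmf P x * ln (pmf P x))"

definition cond_entropy :: "('a \<times> 'b) pmf \<Rightarrow> real" where
  "cond_entropy P =
     (\<Sum>xy\<in>set_pmf P. - pmf P xy * ln (pmf P xy / pmf (map_pmf snd P) (snd xy)))"

text \<open>Dual total correlation of a random vector x indexed by the finite set I;
  the vector x^{-i} with coordinate i removed is represented by x(i := False)
  (all vectors considered take the default value False outside I).\<close>
definition dual_total_correlation :: "'i set \<Rightarrow> ('i \<Rightarrow> bool) pmf \<Rightarrow> real" where
  "dual_total_correlation I P =
     shannon_entropy P - (\<Sum>i\<in>I. cond_entropy (map_pmf (\<lambda>x. (x i, x(i := False))) P))"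

definition graph_edges :: "nat \<Rightarrow> (nat \<times> nat) set" where
  "graph_edges n = {(i, j). 1 \<le> i \<and> i < j \<and> j \<le> n}"

definition label_random_graph ::
  "nat \<Rightarrow> real \<Rightarrow> real \<Rightarrow> (nat \<Rightarrow> nat) pmf \<Rightarrow> (nat \<times> nat \<Rightarrow> bool) pmf" where
  "label_random_graph n p q Z =
     bind_pmf Z (\<lambda>z. Pi_pmf (graph_edges n) False
        (\<lambda>(i, j). bernoulli_pmf (if z i = z j then p else q)))"

end

theory Submission
  imports Defs
begin
locale dtc =
  fixes E :: "'e set" and Z :: "'z pmf" and \<kappa> :: "'z \<Rightarrow> 'e \<Rightarrow> bool pmf"
  assumes finE: "finite E" and finS: "finite (set_pmf Z)"
begin
definition "G = bind_pmf Z (\<lambda>z. Pi_pmf E False (\<kappa> z))"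
definition "X = {x::'e\<Rightarrow>bool. \<forall>a. a \<notin> E \<longrightarrow> x a = False}"
definition "k z e b = pmf (\<kappa> z e) b"
definition "K z x = (\<Prod>e\<in>E. k z e (x e))"
definition "w z x = pmf Z z * K z x"
definition "Pf x = (\<Sum>z\<in>set_pmf Z. w z x)"

lemma finX: "finite X"
proof -
  have "X = (\<lambda>A a. a \<in> A) ` Pow E" unfolding X_def
    by (auto intro!: image_eqI[where x="{a. _ a}"])
  then show ?thesis using finE by simp
qed

lemma X_upd: "x \<in> X \<Longrightarrow> e \<in> E \<Longrightarrow> x(e:=b) \<in> X"
  unfolding X_def by auto

lemma k_nonneg: "k z e b \<ge> 0" unfolding k_def by simp
lemma K_nonneg: "K z x \<ge> 0" unfolding K_def by (simp add: k_nonneg prod_nonneg)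
lemma w_nonneg: "w z x \<ge> 0" unfolding w_def by (simp add: K_nonneg)
lemma Pf_nonneg: "Pf x \<ge> 0" unfolding Pf_def by (simp add: w_nonneg sum_nonneg)
lemma w_le_Pf: "z \<in> set_pmf Z \<Longrightarrow> w z x \<le> Pf x"
  unfolding Pf_def by (rule member_le_sum) (auto simp: w_nonneg finS)

lemma k_sum: "k z e False + k z e True = 1"
proof -
  have "(\<Sum>b\<in>UNIV. pmf (\<kappa> z e) b) = 1" by (rule sum_pmf_eq_1) auto
  then show ?thesis unfolding k_def by (simp add: UNIV_bool)
qed

lemma pmf_Pi_X: "pmf (Pi_pmf E False (\<kappa> z)) x = (if x \<in> X then K z x else 0)"
  unfolding K_def k_def X_def by (subst pmf_Pi[OF finE]) auto

lemma K_sum: "(\<Sum>x\<in>X. K z x) = 1"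
proof -
  have "(\<Sum>x\<in>X. pmf (Pi_pmf E False (\<kappa> z)) x) = 1"
    by (rule sum_pmf_eq_1[OF finX]) (auto simp: set_pmf_eq pmf_Pi_X split: if_splits)
  then show ?thesis by (simp add: pmf_Pi_X)
qed

lemma w_sum: "(\<Sum>x\<in>X. w z x) = pmf Z z"
  unfolding w_def by (simp add: sum_distrib_left[symmetric] K_sum)

lemma pmf_G: "pmf G x = (if x \<in> X then Pf x else 0)"
proof -
  have "pmf G x = (\<Sum>z\<in>set_pmf Z. pmf Z z *\<^sub>R pmf (Pi_pmf E False (\<kappa> z)) x)"
    unfolding G_def pmf_bind by (rule integral_measure_pmf[OF finS]) auto
  then show ?thesis unfolding Pf_def w_def by (simp add: pmf_Pi_X)
qed

lemma set_G: "set_pmf G \<subseteq> X"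
  using pmf_G by (auto simp: set_pmf_eq)

lemma H1: "shannon_entropy G = (\<Sum>x\<in>X. - Pf x * ln (Pf x))"
proof -
  have "shannon_entropy G = (\<Sum>x\<in>X. - pmf G x * ln (pmf G x))"
    unfolding shannon_entropy_def
    by (rule sum.mono_neutral_left[OF finX set_G]) (auto simp: set_pmf_eq)
  also have "\<dots> = (\<Sum>x\<in>X. - Pf x * ln (Pf x))"
    by (rule sum.cong) (auto simp: pmf_G)
  finally show ?thesis .
qed

lemma H2:
  assumes e: "e \<in> E"
  shows "cond_entropy (map_pmf (\<lambda>x. (x e, x(e:=False))) G)
     = (\<Sum>x\<in>X. - Pf x * ln (Pf x / (Pf (x(e:=False)) + Pf (x(e:=True)))))"
proof -
  define f where "f = (\<lambda>x::'e\<Rightarrow>bool. (x e, x(e:=False)))"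
  have inj: "inj f" unfolding f_def
  proof (rule injI)
    fix x y :: "'e \<Rightarrow> bool" assume "(x e, x(e := False)) = (y e, y(e := False))"
    then show "x = y" by (metis fun_upd_triv fun_upd_upd prod.inject)
  qed
  have snd: "pmf (map_pmf snd (map_pmf f G)) (x(e:=False)) = pmf G (x(e:=False)) + pmf G (x(e:=True))" for x
  proof -
    have "map_pmf snd (map_pmf f G) = map_pmf (\<lambda>x. x(e:=False)) G"
      by (simp add: map_pmf_comp f_def)
    moreover have "(\<lambda>x. x(e:=False)) -` {x(e:=False)} = {x(e:=False), x(e:=True)}"
    proof (auto, goal_cases)
      case (1 y)
      then show ?case by (metis (full_types) fun_upd_triv fun_upd_upd)
    qed
    moreover have "x(e:=False) \<noteq> x(e:=True)" by (metis fun_upd_same)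
    ultimately show ?thesis by (simp add: pmf_map measure_measure_pmf_finite)
  qed
  have "cond_entropy (map_pmf f G) = (\<Sum>x\<in>set_pmf G. - pmf G x * ln (pmf G x / (pmf G (x(e:=False)) + pmf G (x(e:=True)))))"
    unfolding cond_entropy_def set_map_pmf
    by (subst sum.reindex) (auto intro: inj_on_subset[OF inj] simp: pmf_map_inj'[OF inj] snd f_def[symmetric],
        simp add: f_def snd[unfolded f_def])
  also have "\<dots> = (\<Sum>x\<in>set_pmf G. - Pf x * ln (Pf x / (Pf (x(e:=False)) + Pf (x(e:=True)))))"
    by (rule sum.cong) (use set_G X_upd[OF _ e] in \<open>auto simp: pmf_G\<close>)
  also have "\<dots> = (\<Sum>x\<in>X. - Pf x * ln (Pf x / (Pf (x(e:=False)) + Pf (x(e:=True)))))"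
    by (rule sum.mono_neutral_left[OF finX set_G]) (auto simp: set_pmf_eq pmf_G)
  finally show ?thesis unfolding f_def .
qed

lemma LB:
  "(\<Sum>x\<in>X. - Pf x * ln (Pf x)) - (\<Sum>e\<in>E. \<Sum>z\<in>set_pmf Z. \<Sum>x\<in>X. - w z x * ln (k z e (x e)))
   \<le> (\<Sum>z\<in>set_pmf Z. - pmf Z z * ln (pmf Z z))"
proof -
  have pt: "w z x * (ln (pmf Z z) + (\<Sum>e\<in>E. ln (k z e (x e))) - ln (Pf x)) \<le> 0"
    if z: "z \<in> set_pmf Z" for z x
  proof (cases "w z x = 0")
    case True then show ?thesis by simp
  next
    case False
    then have wp: "w z x > 0" using w_nonneg[of z x] by simp
    have Kn: "K z x \<noteq> 0" using False unfolding w_def by auto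
    then have kn: "k z e (x e) \<noteq> 0" if "e \<in> E" for e
      using that finE unfolding K_def by auto
    have "ln (w z x) = ln (pmf Z z) + ln (K z x)"
      using False unfolding w_def by (simp add: ln_mult_pos pmf_pos) (metis K_nonneg pmf_nonneg ln_mult_pos less_eq_real_def mult_eq_0_iff)
    also have "ln (K z x) = (\<Sum>e\<in>E. ln (k z e (x e)))"
      unfolding K_def by (rule ln_prod[OF finE kn])
    finally have "ln (pmf Z z) + (\<Sum>e\<in>E. ln (k z e (x e))) - ln (Pf x) = ln (w z x) - ln (Pf x)" by simp
    also have "\<dots> \<le> 0" using w_le_Pf[OF z, of x] wp by simp
    finally show ?thesis using wp by (simp add: mult_nonneg_nonpos)
  qed
  have e1: "(\<Sum>x\<in>X. - Pf x * ln (Pf x)) = (\<Sum>z\<in>set_pmf Z. \<Sum>x\<in>X. - w z x * ln (Pf x))"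
    unfolding Pf_def by (subst sum.swap) (simp add: sum_distrib_right sum_negf)
  have e2: "(\<Sum>e\<in>E. \<Sum>z\<in>set_pmf Z. \<Sum>x\<in>X. - w z x * ln (k z e (x e)))
      = (\<Sum>z\<in>set_pmf Z. \<Sum>x\<in>X. - w z x * (\<Sum>e\<in>E. ln (k z e (x e))))"
    by (simp add: sum_distrib_left sum.swap[of _ E] sum.swap[of _ E X] sum_negf)
  have e3: "(\<Sum>z\<in>set_pmf Z. - pmf Z z * ln (pmf Z z)) = (\<Sum>z\<in>set_pmf Z. \<Sum>x\<in>X. - w z x * ln (pmf Z z))"
    by (simp add: sum_distrib_right[symmetric] w_sum sum_negf)
  have "(\<Sum>z\<in>set_pmf Z. \<Sum>x\<in>X. - w z x * ln (Pf x)) - (\<Sum>z\<in>set_pmf Z. \<Sum>x\<in>X. - w z x * (\<Sum>e\<in>E. ln (k z e (x e))))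
       - (\<Sum>z\<in>set_pmf Z. \<Sum>x\<in>X. - w z x * ln (pmf Z z))
     = (\<Sum>z\<in>set_pmf Z. \<Sum>x\<in>X. w z x * (ln (pmf Z z) + (\<Sum>e\<in>E. ln (k z e (x e))) - ln (Pf x)))"
    by (simp add: sum_subtractf[symmetric] algebra_simps)
  also have "\<dots> \<le> 0" by (intro sum_nonpos pt)
  finally show ?thesis unfolding e1 e2 e3 by simp
qed

lemma LZ: "(\<Sum>z\<in>set_pmf Z. - pmf Z z * ln (pmf Z z)) \<le> ln (card (set_pmf Z))"
proof -
  define c where "c = real (card (set_pmf Z))"
  have cp: "c > 0" unfolding c_def using finS by (simp add: card_gt_0_iff set_pmf_not_empty)
  have s1: "(\<Sum>z\<in>set_pmf Z. pmf Z z) = 1" by (rule sum_pmf_eq_1[OF finS]) simp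
  have pt: "- pmf Z z * ln (pmf Z z) - pmf Z z * ln c \<le> 1 / c - pmf Z z" if "z \<in> set_pmf Z" for z
  proof -
    have zp: "pmf Z z > 0" using that by (simp add: pmf_positive)
    have "ln (1 / (c * pmf Z z)) \<le> 1 / (c * pmf Z z) - 1" by (rule ln_le_minus_one) (use zp cp in simp)
    then have "pmf Z z * ln (1 / (c * pmf Z z)) \<le> pmf Z z * (1 / (c * pmf Z z) - 1)"
      using zp by (simp add: mult_left_mono)
    moreover have "ln (1 / (c * pmf Z z)) = - ln c - ln (pmf Z z)"
      using zp cp by (simp add: ln_div ln_mult)
    ultimately show ?thesis using zp cp by (simp add: algebra_simps)
  qed
  have "(\<Sum>z\<in>set_pmf Z. - pmf Z z * ln (pmf Z z) - pmf Z z * ln c) \<le> (\<Sum>z\<in>set_pmf Z. 1 / c - pmf Z z)"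
    by (rule sum_mono) (rule pt)
  also have "\<dots> = 0" using s1 cp by (simp add: sum_subtractf c_def)
  finally show ?thesis using s1 by (simp add: sum_subtractf sum_distrib_right[symmetric] c_def)
qed

lemma alg: "(c::real) \<noteq> 0 \<Longrightarrow> (a*c*r)*(u/(m*c) - 1) = a*r*(u/m) - a*c*r"
  by (simp add: field_simps)

definition "R z e x = (\<Prod>e'\<in>E-{e}. k z e' (x e'))"

lemma R_nonneg: "R z e x \<ge> 0" unfolding R_def by (simp add: k_nonneg prod_nonneg)

lemma w_split: "e \<in> E \<Longrightarrow> w z x = pmf Z z * k z e (x e) * R z e x"
  unfolding w_def K_def R_def by (simp add: prod.remove[OF finE])

lemma R_upd: "R z e (x(e:=b)) = R z e x"
  unfolding R_def by (rule prod.cong) auto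

lemma Pf_upd: "e \<in> E \<Longrightarrow> Pf (x(e:=b)) = (\<Sum>z\<in>set_pmf Z. pmf Z z * k z e b * R z e x)"
  unfolding Pf_def by (simp add: w_split R_upd)

lemma M_eq: "e \<in> E \<Longrightarrow> Pf (x(e:=False)) + Pf (x(e:=True)) = (\<Sum>z\<in>set_pmf Z. pmf Z z * R z e x)"
proof -
  assume e: "e \<in> E"
  have "Pf (x(e:=False)) + Pf (x(e:=True)) = (\<Sum>z\<in>set_pmf Z. pmf Z z * R z e x * (k z e False + k z e True))"
  proof -
    have "Pf (x(e:=False)) + Pf (x(e:=True)) = (\<Sum>z\<in>set_pmf Z. pmf Z z * k z e False * R z e x + pmf Z z * k z e True * R z e x)"
      by (simp only: Pf_upd[OF e] sum.distrib)
    also have "\<dots> = (\<Sum>z\<in>set_pmf Z. pmf Z z * R z e x * (k z e False + k z e True))"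
      by (rule sum.cong) (simp_all add: algebra_simps)
    finally show ?thesis .
  qed
  then show ?thesis by (simp add: k_sum)
qed

lemma Pf_le_M: "Pf x \<le> Pf (x(e:=False)) + Pf (x(e:=True))"
proof (cases "x e")
  case True
  then have "x(e:=True) = x" by (intro ext) (auto simp: fun_upd_apply)
  then show ?thesis using Pf_nonneg[of "x(e:=False)"] by simp
next
  case False
  then have "x(e:=False) = x" by (intro ext) (auto simp: fun_upd_apply)
  then show ?thesis using Pf_nonneg[of "x(e:=True)"] by simp
qed

lemma LA:
  assumes e: "e \<in> E"
  shows "(\<Sum>z\<in>set_pmf Z. \<Sum>x\<in>X. - w z x * ln (k z e (x e)))
     \<le> (\<Sum>x\<in>X. - Pf x * ln (Pf x / (Pf (x(e:=False)) + Pf (x(e:=True)))))"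
proof -
  define M where "M x = Pf (x(e:=False)) + Pf (x(e:=True))" for x
  have pt: "w z x * (ln (Pf x / M x) - ln (k z e (x e))) \<le> pmf Z z * R z e x * (Pf x / M x) - w z x"
    if z: "z \<in> set_pmf Z" for z x
  proof (cases "w z x = 0")
    case True then show ?thesis
      by (simp add: M_def Pf_nonneg R_nonneg add_nonneg_nonneg)
  next
    case False
    then have wp: "w z x > 0" using w_nonneg[of z x] by simp
    have ws: "w z x = pmf Z z * k z e (x e) * R z e x" by (rule w_split[OF e])
    have kp: "k z e (x e) > 0" using False ws k_nonneg[of z e "x e"] by (auto simp: less_le)
    have Pp: "Pf x > 0" using w_le_Pf[OF z, of x] wp by simp
    have Mp: "M x > 0" using Pf_le_M[of x e] Pp unfolding M_def by simp
    have Y: "ln (Pf x / M x) - ln (k z e (x e)) = ln (Pf x / (M x * k z e (x e)))"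
      using Pp Mp kp by (simp add: ln_div ln_mult)
    have "ln (Pf x / (M x * k z e (x e))) \<le> Pf x / (M x * k z e (x e)) - 1"
      by (rule ln_le_minus_one) (use Pp Mp kp in simp)
    then have "w z x * (ln (Pf x / M x) - ln (k z e (x e))) \<le> w z x * (Pf x / (M x * k z e (x e)) - 1)"
      unfolding Y using wp by (simp add: mult_left_mono)
    also have "\<dots> = pmf Z z * R z e x * (Pf x / M x) - w z x"
      unfolding ws using kp by (intro alg) simp
    finally show ?thesis .
  qed
  have "(\<Sum>z\<in>set_pmf Z. \<Sum>x\<in>X. w z x * (ln (Pf x / M x) - ln (k z e (x e))))
      \<le> (\<Sum>z\<in>set_pmf Z. \<Sum>x\<in>X. pmf Z z * R z e x * (Pf x / M x) - w z x)"
    by (intro sum_mono pt)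
  also have "\<dots> = 0"
  proof -
    have "(\<Sum>z\<in>set_pmf Z. \<Sum>x\<in>X. pmf Z z * R z e x * (Pf x / M x))
        = (\<Sum>x\<in>X. (\<Sum>z\<in>set_pmf Z. pmf Z z * R z e x) * (Pf x / M x))"
      by (subst sum.swap) (simp only: sum_distrib_right)
    also have "\<dots> = (\<Sum>x\<in>X. M x * (Pf x / M x))"
      unfolding M_def M_eq[OF e] ..
    also have "\<dots> = (\<Sum>x\<in>X. Pf x)"
    proof (rule sum.cong)
      fix x show "M x * (Pf x / M x) = Pf x"
        using Pf_le_M[of x e] Pf_nonneg[of x] unfolding M_def[symmetric] by (cases "M x = 0") auto
    qed simp
    also have "\<dots> = (\<Sum>z\<in>set_pmf Z. \<Sum>x\<in>X. w z x)"
      unfolding Pf_def by (rule sum.swap)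
    finally show ?thesis by (simp add: sum_subtractf)
  qed
  finally have le: "(\<Sum>z\<in>set_pmf Z. \<Sum>x\<in>X. w z x * (ln (Pf x / M x) - ln (k z e (x e)))) \<le> 0" .
  have eq: "(\<Sum>x\<in>X. - Pf x * ln (Pf x / M x)) = (\<Sum>z\<in>set_pmf Z. \<Sum>x\<in>X. - w z x * ln (Pf x / M x))"
    unfolding Pf_def[of x for x] by (subst sum.swap) (simp add: sum_distrib_right sum_negf)
  have d: "(\<Sum>z\<in>set_pmf Z. \<Sum>x\<in>X. - w z x * ln (k z e (x e))) - (\<Sum>z\<in>set_pmf Z. \<Sum>x\<in>X. - w z x * ln (Pf x / M x))
     = (\<Sum>z\<in>set_pmf Z. \<Sum>x\<in>X. w z x * (ln (Pf x / M x) - ln (k z e (x e))))"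
    by (simp only: sum_subtractf[symmetric]) (simp add: algebra_simps)
  have "(\<Sum>z\<in>set_pmf Z. \<Sum>x\<in>X. - w z x * ln (k z e (x e))) \<le> (\<Sum>z\<in>set_pmf Z. \<Sum>x\<in>X. - w z x * ln (Pf x / M x))"
    using le d by linarith
  also have "\<dots> = (\<Sum>x\<in>X. - Pf x * ln (Pf x / M x))" by (rule eq[symmetric])
  finally show ?thesis unfolding M_def .
qed

theorem main: "shannon_entropy G - (\<Sum>e\<in>E. cond_entropy (map_pmf (\<lambda>x. (x e, x(e:=False))) G))
   \<le> ln (card (set_pmf Z))"
proof -
  have A: "(\<Sum>e\<in>E. \<Sum>z\<in>set_pmf Z. \<Sum>x\<in>X. - w z x * ln (k z e (x e)))
      \<le> (\<Sum>e\<in>E. cond_entropy (map_pmf (\<lambda>x. (x e, x(e:=False))) G))"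
  proof (rule sum_mono)
    fix e assume e: "e \<in> E"
    show "(\<Sum>z\<in>set_pmf Z. \<Sum>x\<in>X. - w z x * ln (k z e (x e)))
      \<le> cond_entropy (map_pmf (\<lambda>x. (x e, x(e:=False))) G)"
      unfolding H2[OF e] by (rule LA[OF e])
  qed
  have "shannon_entropy G - (\<Sum>e\<in>E. cond_entropy (map_pmf (\<lambda>x. (x e, x(e:=False))) G))
     \<le> (\<Sum>x\<in>X. - Pf x * ln (Pf x)) - (\<Sum>e\<in>E. \<Sum>z\<in>set_pmf Z. \<Sum>x\<in>X. - w z x * ln (k z e (x e)))"
    unfolding H1 using A by (rule diff_left_mono)
  then show ?thesis using order_trans[OF LB LZ] by (rule order_trans)
qed

end


lemma finite_graph_edges: "finite (graph_edges n)"
proof -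
  have "graph_edges n \<subseteq> {1..n} \<times> {1..n}" unfolding graph_edges_def by auto
  then show ?thesis by (rule finite_subset) simp
qed

theorem proposition4:
  fixes n r :: nat and p q :: real and Z :: "(nat \<Rightarrow> nat) pmf"
  assumes "1 \<le> r" and "r \<le> n"
    and "set_pmf Z \<subseteq> PiE {1..n} (\<lambda>_. {1..r})"
    and "0 \<le> p" and "p \<le> 1" and "0 \<le> q" and "q \<le> 1"
  shows "dual_total_correlation (graph_edges n) (label_random_graph n p q Z) \<le> real n * ln (real r)"
proof -
  have finS: "finite (set_pmf Z)"
    by (rule finite_subset[OF assms(3)]) (simp add: finite_PiE)
  interpret d: dtc "graph_edges n" Z "\<lambda>z (i, j). bernoulli_pmf (if z i = z j then p else q)"
    by unfold_locales (auto simp: finite_graph_edges finS)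
  have "dual_total_correlation (graph_edges n) (label_random_graph n p q Z) \<le> ln (card (set_pmf Z))"
    using d.main unfolding dual_total_correlation_def label_random_graph_def d.G_def .
  also have "\<dots> \<le> ln (real (r ^ n))"
  proof -
    have "card (set_pmf Z) \<le> card (PiE {1..n} (\<lambda>_::nat. {1..r}))"
      by (rule card_mono[OF _ assms(3)]) (simp add: finite_PiE)
    also have "\<dots> = r ^ n" by (simp add: card_PiE)
    finally have "real (card (set_pmf Z)) \<le> real (r ^ n)" by linarith
    moreover have "real (card (set_pmf Z)) > 0" using finS by (simp add: card_gt_0_iff set_pmf_not_empty)
    moreover have "real (r ^ n) > 0" using assms(1) by simp
    ultimately show ?thesis using ln_le_cancel_iff by metis
  qed
  also have "\<dots> = real n * ln (real r)" using assms(1) by (simp add: ln_realpow)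
  finally show ?thesis .
qed

end
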